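(* Let $n\ge1$ and let $\mathcal I$ be either the $\sigma$-ideal of meager subsets of $\mathbb R^n$ or the $\sigma$-ideal of Lebesgue null subsets of $\mathbb R^n$. Let $\mathcal D$ be a family of unit spheres in $\mathbb R^n$ with $|\mathcal D|<\mathfrak c$, and let $B\subseteq\mathbb R^n$ be a Borel set with $B\notin\mathcal I$. Then $|B\setminus\bigcup\mathcal D|=\mathfrak c$.
   Context: A unit sphere is a set $\{y\in\mathbb R^n:\|y-x\|=1\}$ for some $x\in\mathbb R^n$ (Euclidean norm). $\mathfrak c=|\mathbb R|$. *)

theory Defs
  imports "HOL-Analysis.Analysis" "HOL-Library.Equipollence"
begin

definition nowhere_dense :: "'a::topological_space set \<Rightarrow> bool" where
  "nowhere_dense A \<longleftrightarrow> interior (closure A) = {}"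

definition meager :: "'a::topological_space set \<Rightarrow> bool" where
  "meager A \<longleftrightarrow> (\<exists>F. countable F \<and> (\<forall>N\<in>F. nowhere_dense N) \<and> A \<subseteq> \<Union>F)"

end

theory Submission
  imports Defs
begin


lemma meager_subset: "meager A \<Longrightarrow> B \<subseteq> A \<Longrightarrow> meager B"
  unfolding meager_def by (meson order_trans)

lemma meager_empty: "meager {}"
  unfolding meager_def by (rule exI[of _ "{}"]) auto

lemma meager_UN:
  assumes I: "countable I" and M: "\<And>i. i \<in> I \<Longrightarrow> meager (A i)"
  shows "meager (\<Union>i\<in>I. A i)"
proof -
  have "\<forall>i\<in>I. \<exists>F. countable F \<and> (\<forall>N\<in>F. nowhere_dense N) \<and> A i \<subseteq> \<Union>F"
    using M by (simp add: meager_def)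
  then obtain F where F: "\<And>i. i \<in> I \<Longrightarrow> countable (F i) \<and> (\<forall>N\<in>F i. nowhere_dense N) \<and> A i \<subseteq> \<Union>(F i)"
    by metis
  show ?thesis unfolding meager_def
  proof (intro exI conjI)
    show "countable (\<Union>i\<in>I. F i)" using F I by (intro countable_UN) auto
    show "\<forall>N\<in>(\<Union>i\<in>I. F i). nowhere_dense N" using F by auto
    show "(\<Union>i\<in>I. A i) \<subseteq> \<Union>(\<Union>i\<in>I. F i)" using F by fastforce
  qed
qed

lemma meager_Un: assumes "meager A" "meager B" shows "meager (A \<union> B)"
proof -
  have "meager (\<Union>b\<in>{True,False}. if b then A else B)" by (rule meager_UN) (use assms in auto)
  moreover have "(\<Union>b\<in>{True,False}. if b then A else B) = A \<union> B" by auto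
  ultimately show ?thesis by simp
qed

lemma nowhere_dense_meager: "nowhere_dense N \<Longrightarrow> meager N"
  unfolding meager_def by (rule exI[of _ "{N}"]) auto

lemma nowhere_dense_frontier_open:
  assumes "open U" shows "nowhere_dense (closure U - U)"
proof -
  have "closed (closure U - U)" using assms by (intro closed_Diff) auto
  then have cl: "closure (closure U - U) = closure U - U" by (rule closure_closed)
  have "interior (closure U - U) = {}"
  proof (rule ccontr)
    let ?V = "interior (closure U - U)"
    assume "?V \<noteq> {}"
    moreover have "?V \<subseteq> closure U" using interior_subset by blast
    ultimately have "?V \<inter> closure U \<noteq> {}" by blast
    then have "?V \<inter> U \<noteq> {}" using open_Int_closure_eq_empty[of ?V U] by auto
    then show False using interior_subset[of "closure U - U"] by blast
  qed
  then show ?thesis unfolding nowhere_dense_def cl by simp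
qed

definition hasBP :: "'a::topological_space set \<Rightarrow> bool" where
  "hasBP A \<longleftrightarrow> (\<exists>U. open U \<and> meager (A - U) \<and> meager (U - A))"

lemma borel_hasBP:
  assumes "A \<in> sets borel" shows "hasBP A"
  using assms unfolding sets_borel
proof (induction rule: sigma_sets.induct)
  case (Basic a)
  then show ?case unfolding hasBP_def by (intro exI[of _ a]) (auto simp: meager_empty)
next
  case Empty
  then show ?case unfolding hasBP_def by (intro exI[of _ "{}"]) (auto simp: meager_empty)
next
  case (Compl a)
  then obtain U where U: "open U" "meager (a - U)" "meager (U - a)" unfolding hasBP_def by blast
  show ?case unfolding hasBP_def
  proof (intro exI conjI)
    show "open (- closure U)" by auto
    have "(UNIV - a) - (- closure U) \<subseteq> (U - a) \<union> (closure U - U)" by auto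
    then show "meager ((UNIV - a) - (- closure U))"
      using meager_Un[OF U(3) nowhere_dense_meager[OF nowhere_dense_frontier_open[OF U(1)]]]
        meager_subset by blast
    have "(- closure U) - (UNIV - a) \<subseteq> a - U" using closure_subset by blast
    then show "meager ((- closure U) - (UNIV - a))" using U(2) meager_subset by blast
  qed
next
  case (Union a)
  then have "\<forall>i. \<exists>U. open U \<and> meager (a i - U) \<and> meager (U - a i)" unfolding hasBP_def by blast
  then obtain U where U: "\<And>i. open (U i) \<and> meager (a i - U i) \<and> meager (U i - a i)" by metis
  show ?case unfolding hasBP_def
  proof (intro exI conjI)
    show "open (\<Union>i. U i)" using U by auto
    have "(\<Union>i. a i) - (\<Union>i. U i) \<subseteq> (\<Union>i\<in>UNIV. a i - U i)" by auto
    moreover have "meager (\<Union>i\<in>UNIV. a i - U i)" using U by (intro meager_UN) auto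
    ultimately show "meager ((\<Union>i. a i) - (\<Union>i. U i))" using meager_subset by blast
    have "(\<Union>i. U i) - (\<Union>i. a i) \<subseteq> (\<Union>i\<in>UNIV. U i - a i)" by auto
    moreover have "meager (\<Union>i\<in>UNIV. U i - a i)" using U by (intro meager_UN) auto
    ultimately show "meager ((\<Union>i. U i) - (\<Union>i. a i))" using meager_subset by blast
  qed
qed




definition tt :: "(nat \<Rightarrow> real) \<Rightarrow> nat set \<Rightarrow> real" where
  "tt s A = (\<Sum>i. if i \<in> A then s i else 0)"

lemma geom_bound:
  fixes s :: "nat \<Rightarrow> real"
  assumes dec: "\<And>m. s (Suc m) \<le> s m / 3"
  shows "s (i + k) \<le> s i * (1/3)^k"
proof (induction k)
  case 0 then show ?case by simp
next
  case (Suc k)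
  have "s (i + Suc k) \<le> s (i + k) / 3" using dec[of "i+k"] by simp
  also have "\<dots> \<le> s i * (1/3)^k / 3" using Suc by (simp add: divide_right_mono)
  finally show ?case by simp
qed

lemma summable_sel:
  fixes s :: "nat \<Rightarrow> real"
  assumes pos: "\<And>m. 0 < s m" and dec: "\<And>m. s (Suc m) \<le> s m / 3"
  shows "summable (\<lambda>i. if i \<in> A then s i else 0)"
proof (rule summable_comparison_test)
  show "\<exists>N. \<forall>n\<ge>N. norm (if n \<in> A then s n else 0) \<le> s 0 * (1/3)^n"
    using geom_bound[where s=s, OF dec, of 0] pos by (auto simp: less_imp_le)
  show "summable (\<lambda>n. s 0 * (1/3::real)^n)"
    by (intro summable_mult summable_geometric) simp
qed

lemma tt_strict:
  fixes s :: "nat \<Rightarrow> real"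
  assumes pos: "\<And>m. 0 < s m" and dec: "\<And>m. s (Suc m) \<le> s m / 3"
    and iA: "i \<in> A" and iA': "i \<notin> A'" and eq: "\<forall>j<i. (j \<in> A) = (j \<in> A')"
  shows "tt s A' < tt s A"
proof -
  define f where "f = (\<lambda>i. if i \<in> A then s i else 0)"
  define g where "g = (\<lambda>i. if i \<in> A' then s i else 0)"
  define d where "d = (\<lambda>j. f j - g j)"
  have sf: "summable f" and sg: "summable g"
    unfolding f_def g_def using summable_sel[where s=s, OF pos dec] by auto
  have sd: "summable d" unfolding d_def using sf sg by (rule summable_diff)
  have "tt s A - tt s A' = suminf d"
    unfolding d_def tt_def f_def[symmetric] g_def[symmetric] using sf sg by (simp add: suminf_diff)
  also have "\<dots> = (\<Sum>n. d (n + Suc i)) + (\<Sum>j<Suc i. d j)"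
    by (rule suminf_split_initial_segment[OF sd])
  also have "(\<Sum>j<Suc i. d j) = s i"
  proof -
    have "(\<Sum>j<i. d j) = 0" using eq by (intro sum.neutral) (auto simp: d_def f_def g_def)
    then show ?thesis using iA iA' by (simp add: d_def f_def g_def)
  qed
  also have "(\<Sum>n. d (n + Suc i)) \<ge> (\<Sum>n. - (s i * (1/3) * (1/3)^n))"
  proof (rule suminf_le)
    fix n
    have "s (i + Suc n) \<le> s i * (1/3)^Suc n" by (rule geom_bound[where s=s, OF dec])
    moreover have "0 \<le> s (n + Suc i)" using pos less_imp_le by blast
    ultimately show "- (s i * (1/3) * (1/3)^n) \<le> d (n + Suc i)"
      unfolding d_def f_def g_def by (auto simp: add.commute)
    show "summable (\<lambda>n. d (n + Suc i))" using sd by (rule summable_ignore_initial_segment)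
    show "summable (\<lambda>n. - (s i * (1/3) * (1/3::real)^n))"
      by (intro summable_minus summable_mult summable_geometric) simp
  qed
  moreover have "(\<Sum>n. - (s i * (1/3) * (1/3::real)^n)) = - (s i / 2)"
  proof -
    have "(\<Sum>n. (1/3::real)^n) = 3/2" by (subst suminf_geometric) auto
    then have "(\<Sum>n. s i * (1/3) * (1/3::real)^n) = s i / 2"
      by (subst suminf_mult) (auto intro: summable_geometric)
    then show ?thesis
      by (subst suminf_minus) (auto intro!: summable_mult summable_geometric)
  qed
  ultimately have "tt s A - tt s A' \<ge> s i / 2" by linarith
  then show ?thesis using pos[of i] by linarith
qed

lemma tt_inj:
  fixes s :: "nat \<Rightarrow> real"
  assumes pos: "\<And>m. 0 < s m" and dec: "\<And>m. s (Suc m) \<le> s m / 3"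
  shows "inj (tt s)"
proof (rule injI, rule ccontr)
  fix A A' assume e: "tt s A = tt s A'" and ne: "A \<noteq> A'"
  then have "\<exists>i. (i \<in> A) \<noteq> (i \<in> A')" by blast
  define i where "i = (LEAST i. (i \<in> A) \<noteq> (i \<in> A'))"
  have i: "(i \<in> A) \<noteq> (i \<in> A')" unfolding i_def using \<open>\<exists>i. _\<close> by (rule LeastI_ex)
  have eq: "\<forall>j<i. (j \<in> A) = (j \<in> A')" unfolding i_def using not_less_Least by blast
  show False
  proof (cases "i \<in> A")
    case True
    then have "tt s A' < tt s A" using i eq by (intro tt_strict[where s=s, OF pos dec]) auto
    then show False using e by simp
  next
    case False
    then have "tt s A < tt s A'" using i eq by (intro tt_strict[where s=s, OF pos dec]) auto
    then show False using e by simp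
  qed
qed

lemma scheme_fin:
  fixes C :: "nat \<Rightarrow> 'a::real_normed_vector set"
  assumes sub: "\<And>m. C (Suc m) \<subseteq> C m" and tr: "\<And>m x. x \<in> C (Suc m) \<Longrightarrow> x + s m *\<^sub>R v \<in> C m"
  shows "m \<le> j \<Longrightarrow> x \<in> C j \<Longrightarrow> x + (\<Sum>i\<in>{m..<j}. if i \<in> A then s i else 0) *\<^sub>R v \<in> C m"
proof (induction j arbitrary: x)
  case 0 then show ?case by simp
next
  case (Suc j)
  show ?case
  proof (cases "m = Suc j")
    case True then show ?thesis using Suc by simp
  next
    case False
    then have mj: "m \<le> j" using Suc by simp
    let ?S = "(\<Sum>i\<in>{m..<j}. if i \<in> A then s i else 0)"
    have sumeq: "(\<Sum>i\<in>{m..<Suc j}. if i \<in> A then s i else 0) = ?S + (if j \<in> A then s j else 0)"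
      using mj by simp
    show ?thesis
    proof (cases "j \<in> A")
      case True
      have "x + s j *\<^sub>R v \<in> C j" using tr Suc.prems by blast
      from Suc.IH[OF mj this] have "x + s j *\<^sub>R v + ?S *\<^sub>R v \<in> C m" .
      then show ?thesis using True unfolding sumeq by (simp add: scaleR_add_left algebra_simps)
    next
      case False
      have "x \<in> C j" using sub Suc.prems by blast
      from Suc.IH[OF mj this] show ?thesis using False unfolding sumeq by simp
    qed
  qed
qed

lemma scheme_limit:
  fixes C :: "nat \<Rightarrow> 'a::real_normed_vector set"
  assumes sub: "\<And>m. C (Suc m) \<subseteq> C m" and tr: "\<And>m x. x \<in> C (Suc m) \<Longrightarrow> x + s m *\<^sub>R v \<in> C m"
    and cl: "closed (C m)" and pos: "\<And>m. 0 < s m" and dec: "\<And>m. s (Suc m) \<le> s m / 3"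
    and p: "\<And>j. p \<in> C j"
  shows "p + tt s {i\<in>A. m \<le> i} *\<^sub>R v \<in> C m"
proof -
  let ?g = "\<lambda>i. if i \<in> {i\<in>A. m \<le> i} then s i else 0"
  have "(\<lambda>j. \<Sum>i<j. ?g i) \<longlonglongrightarrow> tt s {i\<in>A. m \<le> i}"
    unfolding tt_def by (rule summable_LIMSEQ[OF summable_sel[where s=s, OF pos dec]])
  then have lim: "(\<lambda>j. p + (\<Sum>i<j. ?g i) *\<^sub>R v) \<longlonglongrightarrow> p + tt s {i\<in>A. m \<le> i} *\<^sub>R v"
    by (intro tendsto_intros)
  have "eventually (\<lambda>j. p + (\<Sum>i<j. ?g i) *\<^sub>R v \<in> C m) sequentially"
    unfolding eventually_sequentially
  proof (intro exI allI impI)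
    fix j assume mj: "m \<le> j"
    have "(\<Sum>i<j. ?g i) = (\<Sum>i\<in>{m..<j}. ?g i)"
      by (rule sum.mono_neutral_right) auto
    also have "\<dots> = (\<Sum>i\<in>{m..<j}. if i \<in> A then s i else 0)"
      by (rule sum.cong) auto
    finally show "p + (\<Sum>i<j. ?g i) *\<^sub>R v \<in> C m"
      using scheme_fin[where C=C and s=s and v=v and A=A, OF sub tr mj p] by simp
  qed
  then show ?thesis using Lim_in_closed_set[OF cl _ _ lim] by simp
qed

lemma scheme_point:
  fixes C :: "nat \<Rightarrow> 'a::heine_borel set"
  assumes "\<And>m. compact (C m)" "\<And>m. C m \<noteq> {}" "\<And>m. C (Suc m) \<subseteq> C m"
  shows "\<exists>p. \<forall>m. p \<in> C m"
proof -
  have "\<Inter>(range C) \<noteq> {}"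
  proof (rule compact_nest)
    show "C n \<subseteq> C m" if "m \<le> n" for m n
      using lift_Suc_antimono_le[of C, OF assms(3) that] by simp
  qed (use assms in auto)
  then show ?thesis by blast
qed




lemma measure_step:
  fixes C :: "'a::euclidean_space set"
  assumes C: "compact C" and mC: "measure lebesgue C > 0" and v: "norm v = 1" and e: "\<epsilon> > 0"
  shows "\<exists>s C'. 0 < s \<and> s \<le> \<epsilon> \<and> compact C' \<and> C' \<subseteq> C \<and> (\<forall>x\<in>C'. x + s *\<^sub>R v \<in> C)
          \<and> measure lebesgue C' > 0"
proof -
  have Cl: "C \<in> lmeasurable" using C by (rule lmeasurable_compact)
  then have Cs: "C \<in> sets lebesgue" by (simp add: fmeasurable_def)
  obtain V where V: "open V" "C \<subseteq> V" "(V - C) \<in> lmeasurable"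
     "emeasure lebesgue (V - C) < ennreal (measure lebesgue C)"
    using sets_lebesgue_outer_open[OF Cs mC] by blast
  have mVC: "measure lebesgue (V - C) < measure lebesgue C"
    using V(3,4) emeasure_eq_measure2[OF V(3)] by (simp add: ennreal_less_iff)
  obtain \<delta> where d: "\<delta> > 0" "\<forall>x\<in>C. \<forall>y\<in>-V. \<delta> \<le> dist x y"
    using separate_compact_closed[OF C, of "-V"] V(1,2) by auto
  define s where "s = min \<epsilon> \<delta> / 2"
  have s: "0 < s" "s \<le> \<epsilon>" "s < \<delta>" using d e by (auto simp: s_def)
  define C2 where "C2 = (\<lambda>x. x - s *\<^sub>R v) ` C"
  have C2c: "compact C2" unfolding C2_def using C by (rule compact_translation_subtract)
  have C2l: "C2 \<in> lmeasurable" using C2c by (rule lmeasurable_compact)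
  have mC2: "measure lebesgue C2 = measure lebesgue C"
    unfolding C2_def by (rule measure_translation_subtract)
  have C2V: "C2 \<subseteq> V"
  proof
    fix y assume "y \<in> C2"
    then obtain x where x: "x \<in> C" "y = x - s *\<^sub>R v" unfolding C2_def by blast
    have "dist x y = s" using x v s by (simp add: dist_norm)
    then show "y \<in> V" using d x s by force
  qed
  have VC: "C \<union> (V - C) \<in> lmeasurable" using Cl V(3) by (rule fmeasurable.Un)
  have "measure lebesgue (C \<union> C2) \<le> measure lebesgue (C \<union> (V - C))"
    using C2V VC Cl C2l by (intro measure_mono_fmeasurable) (auto simp: fmeasurable_def)
  also have "\<dots> \<le> measure lebesgue C + measure lebesgue (V - C)"
    using Cl V(3) by (intro measure_Un_le) (auto simp: fmeasurable_def)
  finally have U: "measure lebesgue (C \<union> C2) \<le> measure lebesgue C + measure lebesgue (V - C)" .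
  have "measure lebesgue (C \<union> C2) = measure lebesgue C + measure lebesgue C2 - measure lebesgue (C \<inter> C2)"
    using Cl C2l by (rule measure_Un3)
  then have pos: "measure lebesgue (C \<inter> C2) > 0" using U mC2 mVC by linarith
  show ?thesis
  proof (intro exI conjI)
    show "0 < s" "s \<le> \<epsilon>" using s by auto
    show "compact (C \<inter> C2)" using C C2c by (rule compact_Int)
    show "C \<inter> C2 \<subseteq> C" by blast
    show "\<forall>x\<in>C \<inter> C2. x + s *\<^sub>R v \<in> C" unfolding C2_def by auto
    show "measure lebesgue (C \<inter> C2) > 0" by (rule pos)
  qed
qed

lemma shrink1:
  fixes c :: "'a::euclidean_space"
  assumes N: "interior (closure N) = {}" and r: "\<rho> > 0"
  shows "\<exists>c' \<rho>'. \<rho>' > 0 \<and> cball c' \<rho>' \<subseteq> cball c \<rho> \<and> (\<forall>x\<in>cball c' \<rho>'. x + w \<notin> closure N)"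
proof -
  have "\<not> ball (c + w) \<rho> \<subseteq> closure N"
  proof
    assume "ball (c + w) \<rho> \<subseteq> closure N"
    then have "ball (c + w) \<rho> \<subseteq> interior (closure N)" by (simp add: interior_maximal)
    moreover have "c + w \<in> ball (c + w) \<rho>" using r by simp
    ultimately show False using N by blast
  qed
  then obtain y where y: "y \<in> ball (c + w) \<rho>" "y \<notin> closure N" by blast
  have "open (ball (c + w) \<rho> - closure N)" by auto
  then obtain r' where r': "r' > 0" "ball y r' \<subseteq> ball (c + w) \<rho> - closure N"
    using y by (meson DiffI open_contains_ball)
  define \<rho>' where "\<rho>' = min r' (\<rho> - dist (c + w) y) / 2"
  have dy: "dist (c + w) y < \<rho>" using y by simp
  have rp: "\<rho>' > 0" using r' dy by (simp add: \<rho>'_def)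
  show ?thesis
  proof (intro exI conjI)
    show "\<rho>' > 0" by (rule rp)
    show "cball (y - w) \<rho>' \<subseteq> cball c \<rho>"
    proof
      fix x assume "x \<in> cball (y - w) \<rho>'"
      then have "dist (y - w) x \<le> \<rho>'" by simp
      moreover have "dist c x \<le> dist (c + w) y + dist (y - w) x"
        by (simp add: dist_norm) (metis (no_types, lifting) add_diff_cancel_right' diff_add_eq diff_diff_eq2 norm_triangle_ineq)
      ultimately show "x \<in> cball c \<rho>" using dy by (simp add: \<rho>'_def) 
    qed
    show "\<forall>x\<in>cball (y - w) \<rho>'. x + w \<notin> closure N"
    proof
      fix x assume "x \<in> cball (y - w) \<rho>'"
      then have "dist y (x + w) < r'" using r' rp by (simp add: dist_norm \<rho>'_def algebra_simps)
      then show "x + w \<notin> closure N" using r' by auto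
    qed
  qed
qed

lemma shrink:
  fixes c :: "'a::euclidean_space"
  assumes N: "interior (closure N) = {}" and T: "finite T"
  shows "\<rho> > 0 \<Longrightarrow> \<exists>c' \<rho>'. \<rho>' > 0 \<and> cball c' \<rho>' \<subseteq> cball c \<rho> \<and> (\<forall>t\<in>T. \<forall>x\<in>cball c' \<rho>'. x + t *\<^sub>R v \<notin> closure N)"
  using T
proof (induction T arbitrary: c \<rho> rule: finite_induct)
  case empty then show ?case by blast
next
  case (insert t T)
  obtain c1 \<rho>1 where 1: "\<rho>1 > 0" "cball c1 \<rho>1 \<subseteq> cball c \<rho>" "\<forall>x\<in>cball c1 \<rho>1. x + t *\<^sub>R v \<notin> closure N"
    using shrink1[OF N insert.prems] by blast
  obtain c2 \<rho>2 where 2: "\<rho>2 > 0" "cball c2 \<rho>2 \<subseteq> cball c1 \<rho>1" "\<forall>t\<in>T. \<forall>x\<in>cball c2 \<rho>2. x + t *\<^sub>R v \<notin> closure N"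
    using insert.IH[OF 1(1)] by blast
  show ?case using 1 2 by (intro exI[of _ c2] exI[of _ \<rho>2]) auto
qed




context
begin

unbundle cardinal_syntax

lemma quad_norm:
  fixes a v :: "'a::real_inner"
  assumes "norm v = 1"
  shows "(norm (a + t *\<^sub>R v))^2 = t^2 + 2*t*(a \<bullet> v) + a \<bullet> a"
proof -
  have vv: "v \<bullet> v = 1" using assms by (metis power2_norm_eq_inner power_one)
  have "(norm (a + t *\<^sub>R v))^2 = (a + t *\<^sub>R v) \<bullet> (a + t *\<^sub>R v)" by (rule power2_norm_eq_inner)
  also have "\<dots> = t^2 + 2*t*(a \<bullet> v) + a \<bullet> a"
    by (simp add: inner_add_left inner_add_right inner_commute vv power2_eq_square algebra_simps)
  finally show ?thesis .
qed

lemma three_on_sphere: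
  fixes p v x :: "'a::real_inner"
  assumes v: "norm v = 1" and lt: "t1 < t2" "t2 < t3"
    and on: "\<And>t. t \<in> {t1,t2,t3} \<Longrightarrow> dist x (p + t *\<^sub>R v) = 1"
  shows False
proof -
  define a where "a = p - x"
  have f: "t^2 + 2*t*(a \<bullet> v) + a \<bullet> a = 1" if "t \<in> {t1,t2,t3}" for t
  proof -
    have "dist x (p + t *\<^sub>R v) = norm (a + t *\<^sub>R v)"
      by (simp add: a_def dist_norm norm_minus_commute algebra_simps)
    then have "norm (a + t *\<^sub>R v) = 1" using on that by simp
    then show ?thesis using quad_norm[OF v, of a t] by simp
  qed
  have key: "s1 + s2 = - 2 * (a \<bullet> v)" if "s1 \<in> {t1,t2,t3}" "s2 \<in> {t1,t2,t3}" "s1 \<noteq> s2" for s1 s2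
  proof -
    have "(s1 - s2) * (s1 + s2 + 2 * (a \<bullet> v)) = 0"
      using f[OF that(1)] f[OF that(2)] by (simp add: power2_eq_square algebra_simps)
    then show ?thesis using that(3) by simp
  qed
  have "t1 + t2 = - 2 * (a \<bullet> v)" using lt by (intro key) auto
  moreover have "t1 + t3 = - 2 * (a \<bullet> v)" using lt by (intro key) auto
  ultimately show False using lt by simp
qed

lemma UNIV_lepoll_real: "(UNIV :: 'a::euclidean_space set) \<lesssim> (UNIV :: real set)"
proof -
  obtain B :: "'a set set" where B: "countable B" "topological_basis B"
    using ex_countable_basis by blast
  define f where "f x = {b \<in> B. x \<in> b}" for x
  have "inj f"
  proof (rule injI, rule ccontr)
    fix x y assume e: "f x = f y" and ne: "x \<noteq> y"
    have "open (- {y})" by auto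
    then obtain b where "b \<in> B" "x \<in> b" "b \<subseteq> - {y}"
      using topological_basisE[OF B(2)] ne by blast
    then have "b \<in> f x" "b \<notin> f y" by (auto simp: f_def)
    then show False using e by simp
  qed
  then have 1: "(UNIV :: 'a set) \<lesssim> Pow B"
    unfolding lepoll_def by (intro exI[of _ f]) (auto simp: f_def)
  have "inj_on (to_nat_on B) B" using B(1) by (rule inj_on_to_nat_on)
  then have "inj_on (image (to_nat_on B)) (Pow B)" by (rule inj_on_image_Pow)
  then have 2: "Pow B \<lesssim> (UNIV :: nat set set)"
    unfolding lepoll_def by blast
  show ?thesis using lepoll_trans[OF 1 2] eqpoll_imp_lepoll[OF nat_sets_eqpoll_reals]
    by (rule lepoll_trans)
qed

lemma line_lepoll:
  fixes p v :: "'a::euclidean_space"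
  assumes D: "D \<subseteq> {sphere x 1 | x. True}" and v: "norm v = 1"
    and W: "W \<subseteq> range (\<lambda>t. p + t *\<^sub>R v)" "W \<subseteq> \<Union>D"
  shows "W \<lesssim> D \<times> (UNIV :: bool set)"
proof -
  define par where "par w = (w - p) \<bullet> v" for w
  have vv: "v \<bullet> v = 1" using v by (metis power2_norm_eq_inner power_one)
  have parl: "w = p + par w *\<^sub>R v" if wW: "w \<in> W" for w
  proof -
    obtain t where t: "w = p + t *\<^sub>R v" using W(1) wW by blast
    have "par w = t" unfolding par_def t by (simp add: vv)
    then show ?thesis using t by simp
  qed
  define d where "d w = (SOME d. d \<in> D \<and> w \<in> d)" for w
  have dw: "d w \<in> D \<and> w \<in> d w" if wW: "w \<in> W" for w
  proof -
    have "\<exists>d. d \<in> D \<and> w \<in> d" using W(2) wW by blast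
    then show ?thesis unfolding d_def by (rule someI_ex)
  qed
  define b where "b w = (\<exists>u\<in>W. u \<in> d w \<and> par u < par w)" for w
  define \<phi> where "\<phi> w = (d w, b w)" for w
  have noteq: False if w12: "w1 \<in> W" "w2 \<in> W" "\<phi> w1 = \<phi> w2" "par w1 < par w2" for w1 w2
  proof -
    have dd: "d w1 = d w2" and bb: "b w1 = b w2" using w12(3) by (auto simp: \<phi>_def)
    have "w1 \<in> d w2" using dw[OF w12(1)] dd by simp
    then have "b w2" unfolding b_def using w12(1,4) by (intro bexI[of _ w1]) auto
    then obtain u where u: "u \<in> W" "u \<in> d w1" "par u < par w1" using bb unfolding b_def by auto
    obtain x where x: "d w1 = sphere x 1" using dw[OF w12(1)] D by blast
    have m1: "p + par u *\<^sub>R v \<in> d w1" using u(2) parl[OF u(1)] by simp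
    have m2: "p + par w1 *\<^sub>R v \<in> d w1" using dw[OF w12(1)] parl[OF w12(1)] by simp
    have m3: "p + par w2 *\<^sub>R v \<in> d w1" using dw[OF w12(2)] parl[OF w12(2)] dd by simp
    have "dist x (p + t *\<^sub>R v) = 1" if "t \<in> {par u, par w1, par w2}" for t
      using that m1 m2 m3 x by auto
    then show False using three_on_sphere[OF v u(3) w12(4)] by blast
  qed
  have "inj_on \<phi> W"
  proof (rule inj_onI)
    fix w1 w2 assume w: "w1 \<in> W" "w2 \<in> W" "\<phi> w1 = \<phi> w2"
    show "w1 = w2"
    proof (cases "par w1" "par w2" rule: linorder_cases)
      case less then show ?thesis using noteq[OF w] by blast
    next
      case equal then show ?thesis using parl[OF w(1)] parl[OF w(2)] by simp
    next
      case greater then show ?thesis using noteq[OF w(2) w(1) w(3)[symmetric]] by blast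
    qed
  qed
  moreover have "\<phi> ` W \<subseteq> D \<times> UNIV" using dw by (auto simp: \<phi>_def)
  ultimately show ?thesis unfolding lepoll_def by blast
qed

lemma final_card:
  fixes S B :: "'a::euclidean_space set"
  assumes SR: "S \<approx> (UNIV::real set)" and SB: "S \<subseteq> B"
    and W: "S \<inter> \<Union>D \<lesssim> D \<times> (UNIV :: bool set)" and D: "D \<prec> (UNIV::real set)"
  shows "B - \<Union>D \<approx> (UNIV::real set)"
proof (rule lepoll_antisym)
  show "B - \<Union>D \<lesssim> (UNIV::real set)"
    by (rule lepoll_trans[OF subset_imp_lepoll UNIV_lepoll_real]) simp
  have infR: "\<not> finite (UNIV::real set)" by (rule infinite_UNIV_char_0)
  have D1: "D \<lesssim> (UNIV::real set)" and D2: "\<not> D \<approx> (UNIV::real set)"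
    using D unfolding lesspoll_def by auto
  have D1': "|D| \<le>o |UNIV::real set|" using D1 unfolding lepoll_def by (simp only: card_of_ordLeq)
  have D2': "\<not> |D| =o |UNIV::real set|" using D2 by (simp add: eqpoll_iff_card_of_ordIso)
  have Dl: "|D| <o |UNIV::real set|"
    using D1' D2' ordLeq_iff_ordLess_or_ordIso by auto
  have DB: "|D \<times> (UNIV::bool set)| <o |UNIV::real set|"
  proof (cases "finite D")
    case True
    then have "finite (D \<times> (UNIV::bool set))" by simp
    then show ?thesis using infR
      by (intro finite_ordLess_infinite card_of_Well_order) (auto simp: Field_card_of)
  next
    case False
    have "|UNIV::bool set| <o |D|"
      using False by (intro finite_ordLess_infinite card_of_Well_order) (auto simp: Field_card_of)
    then have "|UNIV::bool set| \<le>o |D|" by (rule ordLess_imp_ordLeq)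
    then have "|D \<times> (UNIV::bool set)| =o |D|"
      using card_of_Times_infinite[OF False, of "UNIV::bool set"] by simp
    then show ?thesis using Dl by (rule ordIso_ordLess_trans)
  qed
  have W': "|S \<inter> \<Union>D| \<le>o |D \<times> (UNIV::bool set)|"
    using W unfolding lepoll_def by (simp only: card_of_ordLeq)
  have Wl: "|S \<inter> \<Union>D| <o |UNIV::real set|" using W' DB by (rule ordLeq_ordLess_trans)
  have SRc: "|S| =o |UNIV::real set|" using SR by (simp only: eqpoll_iff_card_of_ordIso)
  have "\<not> |S - \<Union>D| <o |UNIV::real set|"
  proof
    assume "|S - \<Union>D| <o |UNIV::real set|"
    then have "|(S - \<Union>D) \<union> (S \<inter> \<Union>D)| <o |UNIV::real set|"
      by (rule card_of_Un_ordLess_infinite[OF infR _ Wl])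
    moreover have "(S - \<Union>D) \<union> (S \<inter> \<Union>D) = S" by blast
    ultimately have "|S| <o |UNIV::real set|" by simp
    then show False using SRc not_ordLess_ordIso by blast
  qed
  then have "|UNIV::real set| \<le>o |S - \<Union>D|"
    by (simp only: not_ordLess_iff_ordLeq[OF card_of_Well_order card_of_Well_order])
  moreover have "|S - \<Union>D| \<le>o |B - \<Union>D|" using SB by (intro card_of_mono1) blast
  ultimately have "|UNIV::real set| \<le>o |B - \<Union>D|" by (rule ordLeq_transitive)
  then show "(UNIV::real set) \<lesssim> B - \<Union>D" unfolding lepoll_def by (simp only: card_of_ordLeq)
qed


end



lemma tt_split:
  fixes s :: "nat \<Rightarrow> real"
  assumes pos: "\<And>m. 0 < s m" and dec: "\<And>m. s (Suc m) \<le> s m / 3"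
  shows "tt s A = tt s {i\<in>A. k \<le> i} + (\<Sum>i<k. if i \<in> A then s i else 0)"
proof -
  define g1 where "g1 = (\<lambda>i. if i \<in> {i\<in>A. k \<le> i} then s i else 0)"
  define g2 where "g2 = (\<lambda>i. if i \<in> {i\<in>A. i < k} then s i else 0)"
  have s1: "summable g1" unfolding g1_def by (rule summable_sel[where s=s, OF pos dec])
  have s2: "summable g2" unfolding g2_def by (rule summable_sel[where s=s, OF pos dec])
  have "(\<lambda>i. if i \<in> A then s i else 0) = (\<lambda>i. g1 i + g2 i)"
    by (auto simp: g1_def g2_def)
  then have "tt s A = suminf g1 + suminf g2" unfolding tt_def using suminf_add[OF s1 s2] by simp
  moreover have "suminf g2 = (\<Sum>i<k. g2 i)" by (rule suminf_finite) (auto simp: g2_def)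
  moreover have "(\<Sum>i<k. g2 i) = (\<Sum>i<k. if i \<in> A then s i else 0)" by (rule sum.cong) (auto simp: g2_def)
  ultimately show ?thesis unfolding tt_def g1_def by simp
qed

lemma conclusion_from_line:
  fixes p v :: "'a::euclidean_space" and s :: "nat \<Rightarrow> real"
  assumes v: "norm v = 1" and pos: "\<And>m. 0 < s m" and dec: "\<And>m. s (Suc m) \<le> s m / 3"
    and inB: "\<And>A. p + tt s A *\<^sub>R v \<in> B"
    and D: "D \<subseteq> {sphere x 1 | x. True}" and Dc: "D \<prec> (UNIV::real set)"
  shows "B - \<Union>D \<approx> (UNIV::real set)"
proof -
  define S where "S = (\<lambda>A. p + tt s A *\<^sub>R v) ` UNIV"
  have inj: "inj (\<lambda>A. p + tt s A *\<^sub>R v)"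
  proof (rule injI)
    fix A A' assume "p + tt s A *\<^sub>R v = p + tt s A' *\<^sub>R v"
    then have "tt s A = tt s A'" using v by (auto dest: scaleR_right_imp_eq)
    then show "A = A'" using tt_inj[where s=s, OF pos dec] by (simp add: inj_eq)
  qed
  have "S \<approx> (UNIV :: nat set set)" unfolding S_def using inj by (rule inj_on_image_eqpoll_self)
  then have SR: "S \<approx> (UNIV::real set)" using nat_sets_eqpoll_reals by (rule eqpoll_trans)
  have SB: "S \<subseteq> B" unfolding S_def using inB by auto
  have "S \<inter> \<Union>D \<lesssim> D \<times> (UNIV :: bool set)"
    by (rule line_lepoll[OF D v]) (auto simp: S_def)
  then show ?thesis using final_card[OF SR SB _ Dc] by blast
qed

lemma measure_case:
  fixes B :: "'a::euclidean_space set"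
  assumes Bb: "B \<in> sets borel" and Bn: "B \<notin> null_sets lebesgue"
  shows "\<exists>p v s. norm v = 1 \<and> (\<forall>m. 0 < s m) \<and> (\<forall>m. s (Suc m) \<le> s m / 3) \<and> (\<forall>A. p + tt s A *\<^sub>R v \<in> B)"
proof -
  have "sets borel \<subseteq> sets lebesgue" by force
  then have BL: "B \<in> sets lebesgue" using Bb by blast
  have "\<exists>n::nat. B \<inter> cball 0 (real n) \<notin> null_sets lebesgue"
  proof (rule ccontr)
    assume "\<not> ?thesis"
    then have "(\<Union>n::nat. B \<inter> cball 0 (real n)) \<in> null_sets lebesgue" by blast
    moreover have "(\<Union>n::nat. B \<inter> cball 0 (real n)) = B"
    proof (intro equalityI subsetI)
      fix x assume "x \<in> B"
      obtain n :: nat where "norm x \<le> real n" using real_arch_simple by blast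
      then show "x \<in> (\<Union>n::nat. B \<inter> cball 0 (real n))" using \<open>x \<in> B\<close> by auto
    qed auto
    ultimately show False using Bn by simp
  qed
  then obtain n :: nat where n: "B \<inter> cball 0 (real n) \<notin> null_sets lebesgue" by blast
  define S where "S = B \<inter> cball 0 (real n)"
  have SL: "S \<in> sets lebesgue" unfolding S_def using BL by auto
  have Sm: "S \<in> lmeasurable" unfolding S_def
    by (rule bounded_set_imp_lmeasurable) (use SL S_def in auto)
  have mS: "measure lebesgue S > 0"
  proof (rule ccontr)
    assume "\<not> measure lebesgue S > 0"
    then have "measure lebesgue S = 0" using measure_nonneg[of lebesgue S] by linarith
    then have "emeasure lebesgue S = 0" using emeasure_eq_measure2[OF Sm] by simp
    then have "S \<in> null_sets lebesgue" using SL by blast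
    then show False using n S_def by simp
  qed
  obtain T where T: "closed T" "T \<subseteq> S" "S - T \<in> lmeasurable"
    "emeasure lebesgue (S - T) < ennreal (measure lebesgue S)"
    using sets_lebesgue_inner_closed[OF SL mS] by blast
  have mST: "measure lebesgue (S - T) < measure lebesgue S"
    using T(3,4) emeasure_eq_measure2[OF T(3)] by (simp add: ennreal_less_iff)
  have Tc: "compact T"
    using T(1,2) unfolding S_def compact_eq_bounded_closed by (meson bounded_cball bounded_subset inf.boundedE)
  have TL: "T \<in> lmeasurable" using Tc by (rule lmeasurable_compact)
  have "measure lebesgue S \<le> measure lebesgue (T \<union> (S - T))" using T(2) by (simp add: Un_absorb1)
  also have "\<dots> \<le> measure lebesgue T + measure lebesgue (S - T)"
    using TL T(3) by (intro measure_Un_le) (auto simp: fmeasurable_def)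
  finally have mT: "measure lebesgue T > 0" using mST by linarith
  define v :: 'a where "v = (SOME b. b \<in> Basis)"
  have "\<exists>b::'a. b \<in> Basis" using nonempty_Basis by blast
  then have "v \<in> Basis" unfolding v_def by (rule someI_ex)
  then have v: "norm v = 1" by (rule norm_Basis)
  define P where "P = (\<lambda>(n::nat) (C :: 'a set, \<sigma>::real). compact C \<and> C \<subseteq> T \<and> measure lebesgue C > 0 \<and> \<sigma> > 0)"
  define Q where "Q = (\<lambda>(n::nat) (C :: 'a set, \<sigma>::real) (C', \<sigma>'). C' \<subseteq> C \<and> (\<forall>x\<in>C'. x + \<sigma>' *\<^sub>R v \<in> C) \<and> \<sigma>' \<le> \<sigma> / 3)"
  have "\<exists>f. \<forall>n. P n (f n) \<and> Q n (f n) (f (Suc n))"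
  proof (rule dependent_nat_choice)
    show "\<exists>x. P 0 x" using Tc mT by (intro exI[of _ "(T, 1)"]) (auto simp: P_def)
  next
    fix x n assume "P n x"
    then obtain C \<sigma> where x: "x = (C, \<sigma>)" "compact C" "C \<subseteq> T" "measure lebesgue C > 0" "\<sigma> > 0"
      unfolding P_def by (cases x) auto
    obtain s C' where sC: "0 < s" "s \<le> \<sigma>/3" "compact C'" "C' \<subseteq> C" "\<forall>x\<in>C'. x + s *\<^sub>R v \<in> C"
      "measure lebesgue C' > 0"
      using measure_step[OF x(2,4) v, of "\<sigma>/3"] x(5) by auto
    show "\<exists>y. P (Suc n) y \<and> Q n x y"
      using sC x by (intro exI[of _ "(C', s)"]) (auto simp: P_def Q_def)
  qed
  then obtain f where f: "\<And>n. P n (f n)" "\<And>n. Q n (f n) (f (Suc n))" by blast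
  define C where "C m = fst (f m)" for m
  define s where "s m = snd (f (Suc m))" for m
  have PC: "compact (C m) \<and> C m \<subseteq> T \<and> measure lebesgue (C m) > 0 \<and> snd (f m) > 0" for m
    using f(1)[of m] unfolding P_def C_def by (cases "f m") auto
  have QC: "C (Suc m) \<subseteq> C m \<and> (\<forall>x\<in>C (Suc m). x + s m *\<^sub>R v \<in> C m) \<and> s m \<le> snd (f m) / 3" for m
    using f(2)[of m] unfolding Q_def C_def s_def by (cases "f m"; cases "f (Suc m)") auto
  have pos: "0 < s m" for m using PC[of "Suc m"] by (simp add: s_def)
  have dec: "s (Suc m) \<le> s m / 3" for m using QC[of "Suc m"] by (simp add: s_def)
  have sub: "C (Suc m) \<subseteq> C m" for m using QC by blast
  have tr: "x + s m *\<^sub>R v \<in> C m" if "x \<in> C (Suc m)" for m x using QC that by blast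
  have ne: "C m \<noteq> {}" for m using PC[of m] by auto
  obtain p where p: "\<And>m. p \<in> C m" using scheme_point[of C] PC ne sub by blast
  have "p + tt s A *\<^sub>R v \<in> B" for A
  proof -
    have clC0: "closed (C 0)" using PC[of 0] by (simp add: compact_imp_closed)
    have "p + tt s {i\<in>A. 0 \<le> i} *\<^sub>R v \<in> C 0"
      by (rule scheme_limit[where s=s and C=C, OF sub tr clC0 pos dec p])
    then show ?thesis using PC[of 0] T(2) unfolding S_def by auto
  qed
  then show ?thesis using v pos dec by blast
qed




lemma category_case:
  fixes B :: "'a::euclidean_space set"
  assumes Bb: "B \<in> sets borel" and Bm: "\<not> meager B"
  shows "\<exists>p v s. norm v = 1 \<and> (\<forall>m. 0 < s m) \<and> (\<forall>m. s (Suc m) \<le> s m / 3) \<and> (\<forall>A. p + tt s A *\<^sub>R v \<in> B)"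
proof -
  obtain U where U: "open U" "meager (B - U)" "meager (U - B)"
    using borel_hasBP[OF Bb] unfolding hasBP_def by blast
  have "U \<noteq> {}" using U(2) Bm by auto
  then obtain c0 where "c0 \<in> U" by blast
  then obtain r where r: "r > 0" "ball c0 r \<subseteq> U" using U(1) open_contains_ball by blast
  have c0U: "cball c0 (r/2) \<subseteq> U" using r by (intro subset_trans[OF _ r(2)]) (auto simp: subset_eq)
  obtain F where F: "countable F" "\<forall>N\<in>F. nowhere_dense N" "U - B \<subseteq> \<Union>F"
    using U(3) unfolding meager_def by blast
  define N where "N = from_nat_into (insert {} F)"
  have rN: "range N = insert {} F" unfolding N_def using F(1) by simp
  have Nnd: "interior (closure (N k)) = {}" for k
  proof -
    have "N k \<in> insert {} F" using rN by blast
    then show ?thesis using F(2) unfolding nowhere_dense_def by auto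
  qed
  have cover: "U - B \<subseteq> (\<Union>k. N k)" using F(3) rN by blast
  define v :: 'a where "v = (SOME b. b \<in> Basis)"
  have "\<exists>b::'a. b \<in> Basis" using nonempty_Basis by blast
  then have "v \<in> Basis" unfolding v_def by (rule someI_ex)
  then have v: "norm v = 1" by (rule norm_Basis)
  define P where "P = (\<lambda>(n::nat) (c :: 'a, \<rho>::real, \<sigma>::real, T :: real set).
      \<rho> > 0 \<and> \<sigma> > 0 \<and> finite T \<and> (n = 0 \<longrightarrow> T = {0} \<and> cball c \<rho> \<subseteq> U))"
  define Q where "Q = (\<lambda>(n::nat) (c :: 'a, \<rho>::real, \<sigma>::real, T :: real set) (c', \<rho>', \<sigma>', T').
      cball c' \<rho>' \<subseteq> cball c \<rho> \<and> (\<forall>x\<in>cball c' \<rho>'. x + \<sigma>' *\<^sub>R v \<in> cball c \<rho>) \<and> \<sigma>' \<le> \<sigma> / 3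
      \<and> T' = T \<union> (\<lambda>t. t + \<sigma>') ` T \<and> (\<forall>t\<in>T'. \<forall>x\<in>cball c' \<rho>'. x + t *\<^sub>R v \<notin> closure (N n)))"
  have "\<exists>f. \<forall>n. P n (f n) \<and> Q n (f n) (f (Suc n))"
  proof (rule dependent_nat_choice)
    show "\<exists>x. P 0 x" using r c0U by (intro exI[of _ "(c0, r/2, 1, {0})"]) (auto simp: P_def)
  next
    fix x n assume Px: "P n x"
    obtain c \<rho> \<sigma> T where x: "x = (c, \<rho>, \<sigma>, T)" by (cases x) auto
    have pr: "\<rho> > 0" "\<sigma> > 0" "finite T" using Px x by (auto simp: P_def)
    define s where "s = min \<rho> (\<sigma>/3)"
    have s: "s > 0" "s \<le> \<rho>" "s \<le> \<sigma>/3" using pr by (auto simp: s_def)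
    define c1 where "c1 = c - (s/2) *\<^sub>R v"
    define \<rho>1 where "\<rho>1 = \<rho> - s/2"
    have r1: "\<rho>1 > 0" using s by (simp add: \<rho>1_def)
    have sub1: "cball c1 \<rho>1 \<subseteq> cball c \<rho>"
    proof
      fix y assume "y \<in> cball c1 \<rho>1"
      then have "norm (c1 - y) \<le> \<rho>1" by (simp add: dist_norm)
      moreover have "norm (c - y) \<le> norm (c1 - y) + norm ((s/2) *\<^sub>R v)"
        unfolding c1_def by (metis (no_types, lifting) add.commute diff_add_cancel diff_diff_eq2 norm_triangle_ineq)
      moreover have "norm ((s/2) *\<^sub>R v) = s/2" using v s by simp
      ultimately show "y \<in> cball c \<rho>" by (simp add: dist_norm \<rho>1_def)
    qed
    have tr1: "y + s *\<^sub>R v \<in> cball c \<rho>" if "y \<in> cball c1 \<rho>1" for y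
    proof -
      have "norm (c1 - y) \<le> \<rho>1" using that by (simp add: dist_norm)
      moreover have e: "c - (y + s *\<^sub>R v) = (c1 - y) - (s/2) *\<^sub>R v"
        unfolding c1_def by (simp add: algebra_simps) (metis field_sum_of_halves scaleR_left_distrib)
      have "norm (c - (y + s *\<^sub>R v)) \<le> norm (c1 - y) + norm ((s/2) *\<^sub>R v)"
        unfolding e by (rule norm_triangle_ineq4)
      moreover have "norm ((s/2) *\<^sub>R v) = s/2" using v s by simp
      ultimately show ?thesis by (simp add: dist_norm \<rho>1_def)
    qed
    define T' where "T' = T \<union> (\<lambda>t. t + s) ` T"
    have fT': "finite T'" using pr by (simp add: T'_def)
    obtain c' \<rho>' where cr: "\<rho>' > 0" "cball c' \<rho>' \<subseteq> cball c1 \<rho>1"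
      "\<forall>t\<in>T'. \<forall>x\<in>cball c' \<rho>'. x + t *\<^sub>R v \<notin> closure (N n)"
      using shrink[OF Nnd fT' r1, of c1 v] by blast
    show "\<exists>y. P (Suc n) y \<and> Q n x y"
    proof (intro exI[of _ "(c', \<rho>', s, T')"] conjI)
      show "P (Suc n) (c', \<rho>', s, T')" using cr s fT' by (simp add: P_def)
      show "Q n x (c', \<rho>', s, T')" unfolding Q_def x using cr sub1 tr1 s
        by (auto simp: T'_def)
    qed
  qed
  then obtain f where f: "\<And>n. P n (f n)" "\<And>n. Q n (f n) (f (Suc n))" by blast
  define cc where "cc m = fst (f m)" for m
  define rr where "rr m = fst (snd (f m))" for m
  define ss where "ss m = fst (snd (snd (f m)))" for m
  define TT where "TT m = snd (snd (snd (f m)))" for m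
  define C where "C m = cball (cc m) (rr m)" for m
  define s where "s m = ss (Suc m)" for m
  have fm: "f m = (cc m, rr m, ss m, TT m)" for m by (simp add: cc_def rr_def ss_def TT_def)
  have PC: "rr m > 0 \<and> ss m > 0 \<and> finite (TT m) \<and> (m = 0 \<longrightarrow> TT m = {0} \<and> C m \<subseteq> U)" for m
    using f(1)[of m] unfolding fm P_def C_def by simp
  have QC: "C (Suc m) \<subseteq> C m \<and> (\<forall>x\<in>C (Suc m). x + s m *\<^sub>R v \<in> C m) \<and> s m \<le> ss m / 3
      \<and> TT (Suc m) = TT m \<union> (\<lambda>t. t + s m) ` TT m
      \<and> (\<forall>t\<in>TT (Suc m). \<forall>x\<in>C (Suc m). x + t *\<^sub>R v \<notin> closure (N m))" for m
    using f(2)[of m] unfolding fm[of m] fm[of "Suc m"] Q_def C_def s_def by simp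
  have pos: "0 < s m" for m using PC[of "Suc m"] by (simp add: s_def)
  have dec: "s (Suc m) \<le> s m / 3" for m using QC[of "Suc m"] by (simp add: s_def)
  have sub: "C (Suc m) \<subseteq> C m" for m using QC by blast
  have tr: "x + s m *\<^sub>R v \<in> C m" if "x \<in> C (Suc m)" for m x using QC that by blast
  have ne: "C m \<noteq> {}" for m using PC[of m] by (simp add: C_def)
  have cpt: "compact (C m)" for m by (simp add: C_def)
  have cl: "closed (C m)" for m by (simp add: C_def)
  have sums: "(\<Sum>i<m. if i \<in> A then s i else 0) \<in> TT m" for m A
  proof (induction m)
    case 0 then show ?case using PC[of 0] by simp
  next
    case (Suc m)
    have "TT (Suc m) = TT m \<union> (\<lambda>t. t + s m) ` TT m" using QC by blast
    then show ?case using Suc by auto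
  qed
  obtain p where p: "\<And>m. p \<in> C m" using scheme_point[of C] cpt ne sub by blast
  have "p + tt s A *\<^sub>R v \<in> B" for A
  proof -
    let ?x = "p + tt s A *\<^sub>R v"
    have "p + tt s {i\<in>A. 0 \<le> i} *\<^sub>R v \<in> C 0"
      by (rule scheme_limit[where s=s and C=C, OF sub tr cl pos dec p])
    then have xU: "?x \<in> U" using PC[of 0] by auto
    have "?x \<notin> closure (N k)" for k
    proof -
      have y: "p + tt s {i\<in>A. Suc k \<le> i} *\<^sub>R v \<in> C (Suc k)"
        by (rule scheme_limit[where s=s and C=C, OF sub tr cl pos dec p])
      have "?x = (p + tt s {i\<in>A. Suc k \<le> i} *\<^sub>R v) + (\<Sum>i<Suc k. if i \<in> A then s i else 0) *\<^sub>R v"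
        using tt_split[where s=s and A=A and k="Suc k", OF pos dec] by (simp add: scaleR_add_left)
      then show ?thesis using QC[of k] y sums[where m="Suc k" and A=A] by metis
    qed
    then have "?x \<notin> (\<Union>k. N k)" using closure_subset by blast
    then show ?thesis using xU cover by blast
  qed
  then show ?thesis using v pos dec by blast
qed



theorem mainTheorem4:
  fixes I :: "'a::euclidean_space set set"
    and D :: "'a set set"
    and B :: "'a set"
  assumes "I = {A. meager A} \<or> I = null_sets lebesgue"
    and "D \<subseteq> {sphere x 1 | x. True}"
    and "D \<prec> (UNIV :: real set)"
    and "B \<in> sets borel"
    and "B \<notin> I"
  shows "B - \<Union>D \<approx> (UNIV :: real set)"
proof -
  have "\<exists>p v s. norm v = 1 \<and> (\<forall>m. 0 < s m) \<and> (\<forall>m. s (Suc m) \<le> s m / 3) \<and> (\<forall>A. p + tt s A *\<^sub>R v \<in> B)"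
  proof (cases "I = {A. meager A}")
    case True
    then have "\<not> meager B" using assms(5) by simp
    then show ?thesis using category_case[OF assms(4)] by blast
  next
    case False
    then have "I = null_sets lebesgue" using assms(1) by blast
    then have "B \<notin> null_sets lebesgue" using assms(5) by simp
    then show ?thesis using measure_case[OF assms(4)] by blast
  qed
  then obtain p v s where pvs: "norm v = 1" "\<And>m. 0 < s m" "\<And>m. s (Suc m) \<le> s m / 3"
    "\<And>A. p + tt s A *\<^sub>R v \<in> B" by blast
  show ?thesis by (rule conclusion_from_line[OF pvs assms(2,3)])
qed

end
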